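(* Let $p$ be a prime and let $q\in\mathbb{C}_p$ with $|1-q|_p<p^{-1/(p-1)}$ and $q\neq 1$. Then the numbers $\widetilde{\beta}_{n,q}=\int_{\mathbb{Z}_p}[x]_q^n\,d\mu_0(x)$, $n\ge 0$, satisfy $\widetilde{\beta}_{0,q}=1$ and, for every $n\ge 1$, $$\sum_{k=0}^{n}\binom{n}{k}q^k\,\widetilde{\beta}_{k,q}-\widetilde{\beta}_{n,q}=\begin{cases}\dfrac{\log q}{q-1}, & n=1,\\[2mm] 0, & n>1.\end{cases}$$ Moreover, for every $n\ge 0$, $$\widetilde{\beta}_{n,q}=\frac{1}{(1-q)^n}\left(1+\sum_{l=1}^{n}\binom{n}{l}(-1)^{l-1}\frac{l\log q}{1-q^{l}}\right).$$
   Context: $\mathbb{Z}_p$, $\mathbb{Q}_p$, $\mathbb{C}_p$ denote the $p$-adic integers, the $p$-adic numbers, and the completion of an algebraic closure of $\mathbb{Q}_p$. For $q\in\mathbb{C}_p$ with $|1-q|_p<p^{-1/(p-1)}$ one sets $q^x=\exp(x\log q)$ for $x\in\mathbb{Z}_p$ ($p$-adic exponential and logarithm), and $[x]_q=\frac{1-q^x}{1-q}$. For a uniformly differentiable function $f:\mathbb{Z}_p\to\mathbb{C}_p$, the $p$-adic invariant (Volkenborn) integral is $\int_{\mathbb{Z}_p}f(x)\,d\mu_0(x)=\lim_{N\to\infty}p^{-N}\sum_{x=0}^{p^N-1}f(x)$. The modified $q$-Bernoulli numbers are $\widetilde{\beta}_{n,q}=\int_{\mathbb{Z}_p}[x]_q^n\,d\mu_0(x)$.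 *)

theory Defs
  imports "HOL-Analysis.Analysis" "HOL-Computational_Algebra.Polynomial"
begin

definition nonarch_abs :: "('a::field \<Rightarrow> real) \<Rightarrow> bool" where
  "nonarch_abs v \<longleftrightarrow>
     (\<forall>x. v x \<ge> 0) \<and> (\<forall>x. v x = 0 \<longleftrightarrow> x = 0) \<and>
     (\<forall>x y. v (x * y) = v x * v y) \<and>
     (\<forall>x y. v (x + y) \<le> max (v x) (v y))"

definition vtendsto :: "('a::field \<Rightarrow> real) \<Rightarrow> (nat \<Rightarrow> 'a) \<Rightarrow> 'a \<Rightarrow> bool" where
  "vtendsto v f L \<longleftrightarrow> (\<forall>e>0. \<exists>N. \<forall>n\<ge>N. v (f n - L) < e)"

definition vconverges :: "('a::field \<Rightarrow> real) \<Rightarrow> (nat \<Rightarrow> 'a) \<Rightarrow> bool" where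
  "vconverges v f \<longleftrightarrow> (\<exists>L. vtendsto v f L)"

definition vlim :: "('a::field \<Rightarrow> real) \<Rightarrow> (nat \<Rightarrow> 'a) \<Rightarrow> 'a" where
  "vlim v f = (THE L. vtendsto v f L)"

definition vcauchy :: "('a::field \<Rightarrow> real) \<Rightarrow> (nat \<Rightarrow> 'a) \<Rightarrow> bool" where
  "vcauchy v f \<longleftrightarrow> (\<forall>e>0. \<exists>N. \<forall>m\<ge>N. \<forall>n\<ge>N. v (f m - f n) < e)"

definition alg_over_Q :: "'a::field_char_0 \<Rightarrow> bool" where
  "alg_over_Q x \<longleftrightarrow> (\<exists>f::int poly. f \<noteq> 0 \<and> poly (map_poly of_int f) x = 0)"

text \<open>(K, v) is (isometrically isomorphic to) C_p: a characteristic-0 field with a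
  non-archimedean absolute value normalised by v p = 1/p (hence restricting to the
  p-adic absolute value on Q), complete, algebraically closed, and in which the
  algebraic closure of Q is dense.  These properties characterise C_p up to
  isometric isomorphism.\<close>
definition Cp_field :: "nat \<Rightarrow> ('a::field_char_0 \<Rightarrow> real) \<Rightarrow> bool" where
  "Cp_field p v \<longleftrightarrow>
     nonarch_abs v \<and>
     v (of_nat p) = 1 / real p \<and>
     (\<forall>f. vcauchy v f \<longrightarrow> vconverges v f) \<and>
     (\<forall>f::'a poly. degree f > 0 \<longrightarrow> (\<exists>x. poly f x = 0)) \<and>
     (\<forall>x e. e > 0 \<longrightarrow> (\<exists>y. alg_over_Q y \<and> v (x - y) < e))"

definition vsuminf :: "('a::field \<Rightarrow> real) \<Rightarrow> (nat \<Rightarrow> 'a) \<Rightarrow> 'a" where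
  "vsuminf v a = vlim v (\<lambda>N. \<Sum>n<N. a n)"

definition plog :: "('a::field_char_0 \<Rightarrow> real) \<Rightarrow> 'a \<Rightarrow> 'a" where
  "plog v q = vsuminf v (\<lambda>n. (-1) ^ n * (q - 1) ^ (n + 1) / of_nat (n + 1))"

definition pexp :: "('a::field_char_0 \<Rightarrow> real) \<Rightarrow> 'a \<Rightarrow> 'a" where
  "pexp v x = vsuminf v (\<lambda>n. x ^ n / fact n)"

text \<open>q^x = exp(x log q), evaluated at x in N (the Volkenborn Riemann sums only use
  nonnegative integer arguments).\<close>
definition qpow :: "('a::field_char_0 \<Rightarrow> real) \<Rightarrow> 'a \<Rightarrow> nat \<Rightarrow> 'a" where
  "qpow v q x = pexp v (of_nat x * plog v q)"

definition qnum :: "('a::field_char_0 \<Rightarrow> real) \<Rightarrow> 'a \<Rightarrow> nat \<Rightarrow> 'a" where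
  "qnum v q x = (1 - qpow v q x) / (1 - q)"

definition volkenborn_sums :: "nat \<Rightarrow> (nat \<Rightarrow> 'a::field_char_0) \<Rightarrow> nat \<Rightarrow> 'a" where
  "volkenborn_sums p f N = (\<Sum>x<p ^ N. f x) / of_nat (p ^ N)"

definition volkenborn :: "nat \<Rightarrow> ('a::field_char_0 \<Rightarrow> real) \<Rightarrow> (nat \<Rightarrow> 'a) \<Rightarrow> 'a" where
  "volkenborn p v f = vlim v (volkenborn_sums p f)"

definition mod_qbernoulli :: "nat \<Rightarrow> ('a::field_char_0 \<Rightarrow> real) \<Rightarrow> 'a \<Rightarrow> nat \<Rightarrow> 'a" where
  "mod_qbernoulli p v q n = volkenborn p v (\<lambda>x. qnum v q x ^ n)"

end

theory Submission
  imports Defs "HOL-Computational_Algebra.Formal_Power_Series"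
begin


locale padic =
  fixes p :: nat and v :: "'a::field_char_0 \<Rightarrow> real"
  assumes prime: "prime p" and cp: "Cp_field p v"
begin

lemma na: "nonarch_abs v" using cp by (simp add: Cp_field_def)
lemma vnn[simp]: "0 \<le> v x" using na by (simp add: nonarch_abs_def)
lemma v0_iff[simp]: "v x = 0 \<longleftrightarrow> x = 0" using na by (simp add: nonarch_abs_def)
lemma v0[simp]: "v 0 = 0" by simp
lemma vmult: "v (x * y) = v x * v y" using na by (simp add: nonarch_abs_def)
lemma vadd: "v (x + y) \<le> max (v x) (v y)" using na unfolding nonarch_abs_def by blast
lemma vp: "v (of_nat p) = 1 / real p" using cp by (simp add: Cp_field_def)
lemma complete: "vcauchy v f \<Longrightarrow> vconverges v f" using cp by (simp add: Cp_field_def)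
lemma p2: "p \<ge> 2" using prime by (simp add: prime_ge_2_nat)

lemma v1[simp]: "v 1 = 1"
proof -
  have "v 1 = v 1 * v 1" using vmult[of 1 1] by simp
  moreover have "v 1 \<noteq> 0" by simp
  ultimately show ?thesis by (metis mult_cancel_left1)
qed

lemma vm1[simp]: "v (-1) = 1"
proof -
  have "v (-1) * v (-1) = 1" using vmult[of "-1" "-1"] by simp
  moreover have "v (-1) \<ge> 0" by simp
  ultimately show ?thesis
    by (metis abs_of_nonneg mult_cancel_right1 real_sqrt_abs2 real_sqrt_mult_self)
qed

lemma vuminus[simp]: "v (- x) = v x"
  using vmult[of "-1" x] by simp

lemma vsym: "v (x - y) = v (y - x)"
  by (metis minus_diff_eq vuminus)

lemma vdiff: "v (x - y) \<le> max (v x) (v y)"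
  using vadd[of x "-y"] by simp

lemma vpower: "v (x ^ n) = v x ^ n"
  by (induction n) (simp_all add: vmult)

lemma vinverse: "v (inverse x) = 1 / v x"
proof (cases "x = 0")
  case False
  then have "v x * v (inverse x) = 1" using vmult[of x "inverse x"] by simp
  then show ?thesis using False by (auto simp: field_simps)
qed simp

lemma vdivide: "v (x / y) = v x / v y"
  by (simp add: divide_inverse vmult vinverse)

lemma vsum_le: "(\<And>i. i \<in> S \<Longrightarrow> v (f i) \<le> B) \<Longrightarrow> 0 \<le> B \<Longrightarrow> v (sum f S) \<le> B"
proof (induction S rule: infinite_finite_induct)
  case (insert x F)
  then have "v (f x) \<le> B" "v (sum f F) \<le> B" by auto
  moreover have "v (sum f (insert x F)) \<le> max (v (f x)) (v (sum f F))"
    using insert vadd[of "f x" "sum f F"] by simp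
  ultimately show ?case by (simp add: max_def split: if_splits)
qed auto

lemma vsum_less: "(\<And>i. i \<in> S \<Longrightarrow> v (f i) < B) \<Longrightarrow> 0 < B \<Longrightarrow> v (sum f S) < B"
proof (induction S rule: infinite_finite_induct)
  case (insert x F)
  then have "v (f x) < B" "v (sum f F) < B" by auto
  moreover have "v (sum f (insert x F)) \<le> max (v (f x)) (v (sum f F))"
    using insert vadd[of "f x" "sum f F"] by simp
  ultimately show ?case by (simp add: max_def split: if_splits)
qed auto

lemma vnat: "v (of_nat n) \<le> 1"
proof (induction n)
  case (Suc n)
  then show ?case using vadd[of 1 "of_nat n"] by simp
qed simp

lemma vint: "v (of_int i) \<le> 1"
proof (cases "i \<ge> 0")
  case True
  then show ?thesis using vnat[of "nat i"] by simp
next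
  case False
  then have "of_int i = - (of_nat (nat (- i)) :: 'a)" by simp
  then show ?thesis using vnat[of "nat (-i)"] by simp
qed

lemma vcoprime: assumes "\<not> p dvd m" shows "v (of_nat m) = 1"
proof -
  have "coprime p m" using assms prime by (simp add: prime_imp_coprime)
  then have "coprime (int m) (int p)" by (simp add: coprime_commute)
  then obtain a b where ab: "a * int m + b * int p = 1"
    by (metis bezout_int gcd.commute coprime_iff_gcd_eq_1)
  then have "(of_int a * of_nat m + of_int b * of_nat p :: 'a) = 1"
    by (metis of_int_1 of_int_add of_int_mult of_int_of_nat_eq)
  then have "1 \<le> max (v (of_int a * of_nat m)) (v (of_int b * of_nat p))"
    using vadd by (metis v1)
  moreover have "v (of_int a * of_nat m) \<le> v (of_nat m)"
    using vint[of a] by (simp add: vmult mult_right_le_one_le mult_left_le_one_le)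
  moreover have "v (of_int b * of_nat p) \<le> 1 / real p"
    using vint[of b] p2 by (simp add: vmult vp divide_right_mono)
  moreover have "1 / real p < 1" using p2 by simp
  ultimately have "1 \<le> v (of_nat m)" by linarith
  then show ?thesis using vnat[of m] by simp
qed

end

context padic begin

lemma vpowp: "v (of_nat (p ^ N)) = (1 / real p) ^ N"
  by (simp only: of_nat_power vpower vp)

lemma vnat_mult_le: "v (of_nat m * x) \<le> v x"
  using vnat[of m] by (simp add: vmult mult_left_le_one_le)

lemma div_Suc_ndvd: assumes "\<not> p dvd Suc n" shows "Suc n div p = n div p"
proof -
  have "p > 0" using p2 by simp
  have "Suc n mod p \<noteq> 0" using assms by (simp add: dvd_eq_mod_eq_0)
  then show ?thesis using \<open>p > 0\<close>
    by (metis div_mult_mod_eq mod_Suc div_Suc)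
qed

lemma vfact_rec: "v (fact n :: 'a) = (1 / real p) ^ (n div p) * v (fact (n div p) :: 'a)"
proof (induction n)
  case 0
  then show ?case by simp
next
  case (Suc n)
  show ?case
  proof (cases "p dvd Suc n")
    case False
    then have "v (fact (Suc n) :: 'a) = v (fact n :: 'a)"
      by (simp add: vmult vcoprime del: of_nat_Suc)
    then show ?thesis using Suc div_Suc_ndvd[OF False] by simp
  next
    case True
    then obtain m where m: "Suc n = p * m" by blast
    have m1: "m \<ge> 1" using m by (cases m) auto
    have pd: "Suc n div p = m" using m p2 by simp
    have nd: "n div p = m - 1"
    proof -
      obtain k where k: "m = Suc k" using m1 by (cases m) auto
      have e: "n = (p - 1) + k * p" using m k p2 by (simp add: algebra_simps)
      have p0: "p \<noteq> 0" using p2 by linarith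
      have pl: "p - 1 < p" using p2 by linarith
      have "n div p = ((p - 1) + k * p) div p" using e by (simp only:)
      also have "\<dots> = k + (p - 1) div p" using p0 by (rule div_mult_self1)
      also have "(p - 1) div p = 0" using pl by (rule div_less)
      finally show ?thesis using k by simp
    qed
    obtain k where k: "m = Suc k" using m1 by (cases m) auto
    have "v (fact (Suc n) :: 'a) = v (of_nat (Suc n)) * v (fact n :: 'a)"
      by (simp only: fact_Suc vmult)
    also have "v (of_nat (Suc n) :: 'a) = v (of_nat m) * (1 / real p)"
      by (simp only: m of_nat_mult vmult vp mult.commute)
    also have "v (fact n :: 'a) = (1 / real p) ^ k * v (fact k :: 'a)"
      using Suc nd k by simp
    also have "v (of_nat m) * (1 / real p) * ((1 / real p) ^ k * v (fact k :: 'a))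
        = (1 / real p) ^ m * (v (of_nat m) * v (fact k :: 'a))"
      by (simp only: k power_Suc mult_ac)
    also have "v (of_nat m) * v (fact k :: 'a) = v (fact m :: 'a)"
      by (simp only: k fact_Suc vmult)
    finally show ?thesis using pd by simp
  qed
qed

definition rho :: real where "rho = real p powr (- 1 / (real p - 1))"

lemma rho_pos: "rho > 0" using p2 by (simp add: rho_def)

lemma rho_pow: "rho ^ (p - 1) = 1 / real p"
proof -
  have "rho ^ (p - 1) = real p powr (real (p - 1) * (- 1 / (real p - 1)))"
    unfolding rho_def using p2 by (intro powr_power) simp
  also have "real (p - 1) * (- 1 / (real p - 1)) = -1" using p2 by (simp add: of_nat_diff)
  finally show ?thesis using p2 by (simp add: powr_minus divide_inverse)
qed

lemma rho_le1: "rho \<le> 1"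
proof -
  have "1 \<le> real p powr (1 / (real p - 1))" using p2 by (intro ge_one_powr_ge_zero) auto
  moreover have "rho = inverse (real p powr (1 / (real p - 1)))"
    unfolding rho_def by (simp add: powr_minus [symmetric])
  ultimately show ?thesis by (simp add: inverse_le_1_iff)
qed

lemma vfact_bound: "rho ^ (n - 1) \<le> v (fact n :: 'a)"
proof (induction n rule: less_induct)
  case (less n)
  define m where "m = n div p"
  have rec: "v (fact n :: 'a) = (1 / real p) ^ m * v (fact m :: 'a)"
    unfolding m_def by (rule vfact_rec)
  show ?case
  proof (cases "m = 0")
    case True
    then have "v (fact n :: 'a) = 1" using rec by simp
    moreover have "rho ^ (n - 1) \<le> 1" using rho_le1 rho_pos by (intro power_le_one) auto
    ultimately show ?thesis by simp
  next
    case False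
    have "n > 0" using False m_def by (cases n) auto
    then have "m < n" unfolding m_def using p2 by (intro div_less_dividend) auto
    then have IH: "rho ^ (m - 1) \<le> v (fact m :: 'a)" using less by simp
    have pm: "p * m \<le> n" using m_def by simp
    have e1: "(1 / real p) ^ m = rho ^ ((p - 1) * m)" by (simp only: rho_pow[symmetric] power_mult)
    have "rho ^ ((p - 1) * m) * rho ^ (m - 1) \<le> (1 / real p) ^ m * v (fact m :: 'a)"
      unfolding e1 using IH rho_pos by (intro mult_left_mono) auto
    then have A: "rho ^ ((p - 1) * m) * rho ^ (m - 1) \<le> v (fact n :: 'a)" using rec by simp
    obtain k where k: "m = Suc k" using False by (cases m) auto
    obtain p' where p': "p = Suc p'" using p2 by (cases p) auto
    have "(p - 1) * m + (m - 1) = p * m - 1" unfolding k p' by simp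
    then have B: "rho ^ ((p - 1) * m) * rho ^ (m - 1) = rho ^ (p * m - 1)"
      by (simp only: power_add[symmetric])
    have C: "rho ^ (n - 1) \<le> rho ^ (p * m - 1)"
      using pm rho_pos rho_le1 by (intro power_decreasing) auto
    show ?thesis using A B C by linarith
  qed
qed

lemma vfact_le1: "v (fact n :: 'a) \<le> 1"
  using vnat[of "fact n"] by (simp only: of_nat_fact)

lemma vnat_bound: "n \<ge> 1 \<Longrightarrow> rho ^ (n - 1) \<le> v (of_nat n :: 'a)"
proof -
  assume n: "n \<ge> 1"
  then obtain k where k: "n = Suc k" by (cases n) auto
  have "v (fact n :: 'a) = v (of_nat n :: 'a) * v (fact k :: 'a)"
    by (simp only: k fact_Suc vmult)
  also have "\<dots> \<le> v (of_nat n :: 'a)"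
    using vfact_le1[of k] by (simp add: mult_left_le)
  finally show ?thesis using vfact_bound[of n] by simp
qed

end

context padic begin

lemma vtendstoD: "vtendsto v f L \<Longrightarrow> e > 0 \<Longrightarrow> \<exists>N. \<forall>n\<ge>N. v (f n - L) < e"
  by (simp add: vtendsto_def)

lemma vtendstoI: "(\<And>e. e > 0 \<Longrightarrow> \<exists>N. \<forall>n\<ge>N. v (f n - L) < e) \<Longrightarrow> vtendsto v f L"
  by (simp add: vtendsto_def)

lemma vtendsto_unique: assumes "vtendsto v f a" "vtendsto v f b" shows "a = b"
proof (rule ccontr)
  assume "a \<noteq> b"
  then have e: "v (a - b) > 0" using vnn[of "a - b"] by (simp add: order_le_less)
  obtain N1 where N1: "\<forall>n\<ge>N1. v (f n - a) < v (a - b)" using vtendstoD[OF assms(1) e] by blast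
  obtain N2 where N2: "\<forall>n\<ge>N2. v (f n - b) < v (a - b)" using vtendstoD[OF assms(2) e] by blast
  define n where "n = max N1 N2"
  have "a - b = (f n - b) - (f n - a)" by simp
  then have "v (a - b) \<le> max (v (f n - b)) (v (f n - a))" using vdiff by metis
  moreover have "v (f n - a) < v (a - b)" "v (f n - b) < v (a - b)" using N1 N2 n_def by auto
  ultimately show False by simp
qed

lemma vlim_eq: "vtendsto v f L \<Longrightarrow> vlim v f = L"
  unfolding vlim_def using vtendsto_unique by blast

lemma vtendsto_const: "vtendsto v (\<lambda>n. c) c"
  by (simp add: vtendsto_def)

lemma vtendsto_add: assumes "vtendsto v f a" "vtendsto v g b"
  shows "vtendsto v (\<lambda>n. f n + g n) (a + b)"
proof (rule vtendstoI)
  fix e :: real assume e: "e > 0"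
  obtain N1 where N1: "\<forall>n\<ge>N1. v (f n - a) < e" using vtendstoD[OF assms(1) e] by blast
  obtain N2 where N2: "\<forall>n\<ge>N2. v (g n - b) < e" using vtendstoD[OF assms(2) e] by blast
  have "\<forall>n\<ge>max N1 N2. v (f n + g n - (a + b)) < e"
  proof (intro allI impI)
    fix n assume "n \<ge> max N1 N2"
    then have "v (f n - a) < e" "v (g n - b) < e" using N1 N2 by auto
    moreover have "v (f n + g n - (a + b)) \<le> max (v (f n - a)) (v (g n - b))"
      using vadd[of "f n - a" "g n - b"] by (simp add: algebra_simps)
    ultimately show "v (f n + g n - (a + b)) < e" by simp
  qed
  then show "\<exists>N. \<forall>n\<ge>N. v (f n + g n - (a + b)) < e" by blast
qed

lemma vtendsto_uminus: assumes "vtendsto v f a" shows "vtendsto v (\<lambda>n. - f n) (- a)"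
proof -
  have e: "v (- x - - y) = v (x - y)" for x y
  proof -
    have "- x - - y = - (x - y)" by simp
    then show ?thesis by (simp only: vuminus)
  qed
  show ?thesis using assms unfolding vtendsto_def e .
qed

lemma vtendsto_diff: assumes "vtendsto v f a" "vtendsto v g b"
  shows "vtendsto v (\<lambda>n. f n - g n) (a - b)"
  using vtendsto_add[OF assms(1) vtendsto_uminus[OF assms(2)]] by simp

lemma vtendsto_mult: assumes "vtendsto v f a" "vtendsto v g b"
  shows "vtendsto v (\<lambda>n. f n * g n) (a * b)"
proof (rule vtendstoI)
  fix e :: real assume e: "e > 0"
  define d1 where "d1 = min 1 (e / (1 + v b))"
  define d2 where "d2 = e / (2 + v a)"
  have "d1 \<le> 1" unfolding d1_def by simp
  have d1: "d1 > 0" using e by (simp add: d1_def add_pos_nonneg)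
  have d2: "d2 > 0" using e by (simp add: d2_def add_pos_nonneg)
  obtain N1 where N1: "\<forall>n\<ge>N1. v (f n - a) < d1" using vtendstoD[OF assms(1) d1] by blast
  obtain N2 where N2: "\<forall>n\<ge>N2. v (g n - b) < d2" using vtendstoD[OF assms(2) d2] by blast
  have "\<forall>n\<ge>max N1 N2. v (f n * g n - a * b) < e"
  proof (intro allI impI)
    fix n assume "n \<ge> max N1 N2"
    then have h1: "v (f n - a) < d1" and h2: "v (g n - b) < d2" using N1 N2 by auto
    have "f n = (f n - a) + a" by simp
    then have "v (f n) \<le> max (v (f n - a)) (v a)" by (metis vadd)
    also have "\<dots> \<le> 1 + v a" using h1 \<open>d1 \<le> 1\<close> vnn[of a] by linarith
    finally have vf: "v (f n) \<le> 1 + v a" .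
    have "v (f n * (g n - b)) = v (f n) * v (g n - b)" by (simp add: vmult)
    also have "\<dots> \<le> (1 + v a) * v (g n - b)" using vf by (simp add: mult_right_mono)
    also have "\<dots> \<le> (1 + v a) * d2" using h2 by (simp add: mult_left_mono add_nonneg_nonneg)
    also have "(1 + v a) * d2 < e"
    proof -
      have "(1 + v a) * d2 = e * ((1 + v a) / (2 + v a))" unfolding d2_def by simp
      also have "(1 + v a) / (2 + v a) < 1"
      proof -
        have "0 < 2 + v a" using vnn[of a] by linarith
        then show ?thesis by (simp add: divide_less_eq)
      qed
      finally show ?thesis using e by (simp add: mult_less_cancel_left1)
    qed
    finally have A: "v (f n * (g n - b)) < e" .
    have "v ((f n - a) * b) = v (f n - a) * v b" by (simp add: vmult)
    also have "\<dots> \<le> e / (1 + v b) * v b" using h1 d1_def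
      by (intro mult_right_mono) auto
    also have "e / (1 + v b) * v b < e" using e by (simp add: field_simps add_pos_nonneg)
    finally have B: "v ((f n - a) * b) < e" .
    have "f n * g n - a * b = f n * (g n - b) + (f n - a) * b" by (simp add: algebra_simps)
    then have "v (f n * g n - a * b) \<le> max (v (f n * (g n - b))) (v ((f n - a) * b))"
      by (metis vadd)
    then show "v (f n * g n - a * b) < e" using A B by simp
  qed
  then show "\<exists>N. \<forall>n\<ge>N. v (f n * g n - a * b) < e" by blast
qed

lemma vtendsto_cmult: "vtendsto v f a \<Longrightarrow> vtendsto v (\<lambda>n. c * f n) (c * a)"
  by (rule vtendsto_mult[OF vtendsto_const])

lemma vtendsto_sum: "finite S \<Longrightarrow> (\<And>k. k \<in> S \<Longrightarrow> vtendsto v (f k) (L k)) \<Longrightarrow>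
  vtendsto v (\<lambda>n. \<Sum>k\<in>S. f k n) (\<Sum>k\<in>S. L k)"
proof (induction S rule: finite_induct)
  case empty
  then show ?case by (simp add: vtendsto_const)
next
  case (insert x F)
  show ?case unfolding sum.insert[OF insert.hyps] by (rule vtendsto_add) (use insert in auto)
qed

lemma vtendsto_power: "vtendsto v f a \<Longrightarrow> vtendsto v (\<lambda>n. f n ^ k) (a ^ k)"
proof (induction k)
  case 0 then show ?case by (simp add: vtendsto_const)
next
  case (Suc k) then show ?case unfolding power_Suc by (intro vtendsto_mult)
qed

lemma vtendsto_bound: assumes "\<And>n. n \<ge> K \<Longrightarrow> v (f n - L) \<le> g n" and "g \<longlonglongrightarrow> 0"
  shows "vtendsto v f L"
proof (rule vtendstoI)
  fix e :: real assume e: "e > 0"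
  have "eventually (\<lambda>n. g n < e) sequentially" using order_tendstoD(2)[OF assms(2) e] .
  then obtain N where N: "\<forall>n\<ge>N. g n < e" by (auto simp: eventually_sequentially)
  have "\<forall>n\<ge>max N K. v (f n - L) < e" using N assms(1)
    by (metis max.bounded_iff order_le_less_trans)
  then show "\<exists>N. \<forall>n\<ge>N. v (f n - L) < e" by blast
qed

lemma vtendsto_zero_geom: assumes "\<And>n. v (f n) \<le> C * r ^ n" "0 \<le> r" "r < 1"
  shows "vtendsto v f 0"
proof (rule vtendsto_bound[of 0])
  show "(\<lambda>n. C * r ^ n) \<longlonglongrightarrow> 0" using assms
    by (intro tendsto_mult_right_zero LIMSEQ_power_zero) auto
qed (use assms in simp)

lemma vtendsto_Suc_iff: "vtendsto v (\<lambda>n. f (Suc n)) L \<longleftrightarrow> vtendsto v f L"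
proof
  assume a: "vtendsto v (\<lambda>n. f (Suc n)) L"
  show "vtendsto v f L"
  proof (rule vtendstoI)
    fix e :: real assume "e > 0"
    then obtain N where "\<forall>n\<ge>N. v (f (Suc n) - L) < e" using vtendstoD[OF a] by blast
    then have "\<forall>n\<ge>Suc N. v (f n - L) < e"
      by (metis Suc_le_D Suc_le_mono)
    then show "\<exists>N. \<forall>n\<ge>N. v (f n - L) < e" by blast
  qed
next
  assume a: "vtendsto v f L"
  show "vtendsto v (\<lambda>n. f (Suc n)) L"
  proof (rule vtendstoI)
    fix e :: real assume "e > 0"
    then obtain N where "\<forall>n\<ge>N. v (f n - L) < e" using vtendstoD[OF a] by blast
    then have "\<forall>n\<ge>N. v (f (Suc n) - L) < e" by simp
    then show "\<exists>N. \<forall>n\<ge>N. v (f (Suc n) - L) < e" by blast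
  qed
qed

lemma vtendsto_cong_ev: assumes "\<And>n. n \<ge> K \<Longrightarrow> f n = g n" "vtendsto v f L" shows "vtendsto v g L"
proof (rule vtendstoI)
  fix e :: real assume "e > 0"
  then obtain N where N: "\<forall>n\<ge>N. v (f n - L) < e" using vtendstoD[OF assms(2)] by blast
  have "\<forall>n\<ge>max N K. v (g n - L) < e" using N assms(1) by fastforce
  then show "\<exists>N. \<forall>n\<ge>N. v (g n - L) < e" by blast
qed

definition vsums :: "(nat \<Rightarrow> 'a) \<Rightarrow> 'a \<Rightarrow> bool" where
  "vsums f s \<longleftrightarrow> vtendsto v (\<lambda>N. \<Sum>n<N. f n) s"

lemma vsums_conv: assumes "vtendsto v f 0" shows "\<exists>s. vsums f s"
proof -
  have "vcauchy v (\<lambda>N. \<Sum>n<N. f n)"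
    unfolding vcauchy_def
  proof (intro allI impI)
    fix e :: real assume e: "e > 0"
    obtain N where N: "\<forall>n\<ge>N. v (f n) < e" using vtendstoD[OF assms e] by auto
    have key: "v ((\<Sum>n<m. f n) - (\<Sum>n<k. f n)) < e" if "N \<le> k" "k \<le> m" for m k
    proof -
      have "(\<Sum>n<m. f n) - (\<Sum>n<k. f n) = (\<Sum>n\<in>{k..<m}. f n)"
        using that by (simp add: lessThan_atLeast0 sum_diff_nat_ivl)
      also have "v \<dots> < e" using N that e by (intro vsum_less) auto
      finally show ?thesis .
    qed
    have "\<forall>m\<ge>N. \<forall>k\<ge>N. v ((\<Sum>n<m. f n) - (\<Sum>n<k. f n)) < e"
    proof (intro allI impI)
      fix m k assume "m \<ge> N" "k \<ge> N"
      show "v ((\<Sum>n<m. f n) - (\<Sum>n<k. f n)) < e"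
      proof (cases "k \<le> m")
        case True then show ?thesis using key \<open>k \<ge> N\<close> by simp
      next
        case False then show ?thesis using key[of m k] \<open>m \<ge> N\<close> vsym by (metis nle_le)
      qed
    qed
    then show "\<exists>N. \<forall>m\<ge>N. \<forall>k\<ge>N. v ((\<Sum>n<m. f n) - (\<Sum>n<k. f n)) < e" by blast
  qed
  then show ?thesis using complete unfolding vconverges_def vsums_def by blast
qed

lemma vsuminf_eq: "vsums f s \<Longrightarrow> vsuminf v f = s"
  unfolding vsums_def vsuminf_def by (rule vlim_eq)

lemma vsums_unique: "vsums f s \<Longrightarrow> vsums f t \<Longrightarrow> s = t"
  unfolding vsums_def by (rule vtendsto_unique)

lemma vtendsto_vbound: assumes "vtendsto v F s" "\<And>N. N \<ge> K \<Longrightarrow> v (F N) \<le> B" shows "v s \<le> B"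
proof (rule ccontr)
  assume c: "\<not> v s \<le> B"
  then have "v s > 0" using assms(2)[of K] vnn[of "F K"] by linarith
  then obtain N where N: "\<forall>n\<ge>N. v (F n - s) < v s" using vtendstoD[OF assms(1)] by blast
  define n where "n = max N K"
  have "s = F n - (F n - s)" by simp
  then have "v s \<le> max (v (F n)) (v (F n - s))" by (metis vdiff)
  moreover have "v (F n) \<le> B" "v (F n - s) < v s" using assms(2) N n_def by auto
  ultimately show False using c by simp
qed

lemma vsums_bound: assumes "vsums f s" "\<And>n. v (f n) \<le> B" shows "v s \<le> B"
proof -
  have B: "B \<ge> 0" using assms(2)[of 0] vnn[of "f 0"] by linarith
  show ?thesis using assms(1) unfolding vsums_def
    by (rule vtendsto_vbound[of _ _ 0]) (use assms(2) B in \<open>intro vsum_le\<close>)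
qed

lemma vsums_add: "vsums f s \<Longrightarrow> vsums g t \<Longrightarrow> vsums (\<lambda>n. f n + g n) (s + t)"
  unfolding vsums_def sum.distrib by (rule vtendsto_add)

lemma vsums_diff: "vsums f s \<Longrightarrow> vsums g t \<Longrightarrow> vsums (\<lambda>n. f n - g n) (s - t)"
  unfolding vsums_def sum_subtractf by (rule vtendsto_diff)

lemma vsums_cmult: "vsums f s \<Longrightarrow> vsums (\<lambda>n. c * f n) (c * s)"
  unfolding vsums_def sum_distrib_left[symmetric] by (rule vtendsto_cmult)

lemma vsums_divide: "vsums f s \<Longrightarrow> vsums (\<lambda>n. f n / c) (s / c)"
  using vsums_cmult[of f s "inverse c"] by (simp add: divide_inverse mult.commute)

lemma vsums_sum: "finite S \<Longrightarrow> (\<And>k. k \<in> S \<Longrightarrow> vsums (f k) (s k)) \<Longrightarrow>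
  vsums (\<lambda>n. \<Sum>k\<in>S. f k n) (\<Sum>k\<in>S. s k)"
proof (induction S rule: finite_induct)
  case empty
  then show ?case by (simp add: vsums_def vtendsto_const)
next
  case (insert x F)
  show ?case unfolding sum.insert[OF insert.hyps] by (rule vsums_add) (use insert in auto)
qed

lemma vsums_Suc_iff: "vsums (\<lambda>n. f (Suc n)) s \<longleftrightarrow> vsums f (s + f 0)"
proof -
  have "vsums f (s + f 0) \<longleftrightarrow> vtendsto v (\<lambda>N. \<Sum>n<Suc N. f n) (s + f 0)"
    unfolding vsums_def by (rule vtendsto_Suc_iff[symmetric])
  also have "\<dots> \<longleftrightarrow> vtendsto v (\<lambda>N. (\<Sum>n<N. f (Suc n)) + f 0) (s + f 0)"
    by (simp only: sum.lessThan_Suc_shift add.commute)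
  also have "\<dots> \<longleftrightarrow> vtendsto v (\<lambda>N. (\<Sum>n<N. f (Suc n))) s"
    unfolding vtendsto_def by (simp add: algebra_simps)
  finally show ?thesis unfolding vsums_def by simp
qed

lemma vsums_finite: assumes "\<And>n. n \<ge> K \<Longrightarrow> f n = 0" shows "vsums f (\<Sum>n<K. f n)"
  unfolding vsums_def
proof (rule vtendsto_cong_ev[of K])
  show "(\<Sum>n<K. f n) = (\<Sum>n<N. f n)" if "K \<le> N" for N
  proof -
    have "(\<Sum>n<N. f n) = (\<Sum>n<K. f n) + (\<Sum>n\<in>{K..<N}. f n)"
      using that by (simp add: lessThan_atLeast0 sum.atLeastLessThan_concat)
    then show ?thesis using assms by simp
  qed
qed (rule vtendsto_const)

end

context padic begin

lemma vbounded: assumes "vtendsto v a 0" shows "\<exists>M>0. \<forall>i. v (a i) \<le> M"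
proof -
  obtain N where N: "\<forall>n\<ge>N. v (a n - 0) < 1" using vtendstoD[OF assms, of 1] by auto
  define M where "M = 1 + (\<Sum>i<N. v (a i))"
  have s0: "0 \<le> (\<Sum>i<N. v (a i))" by (intro sum_nonneg) simp
  have "v (a i) \<le> M" for i
  proof (cases "i < N")
    case True
    then have "v (a i) \<le> (\<Sum>i<N. v (a i))" by (intro member_le_sum) auto
    then show ?thesis by (simp add: M_def)
  next
    case False
    then have "v (a i) < 1" using N by simp
    then show ?thesis using s0 by (simp add: M_def)
  qed
  moreover have "M > 0" using s0 by (simp add: M_def)
  ultimately show ?thesis by blast
qed

lemma vsums_cauchy:
  assumes a0: "vtendsto v a 0" and b0: "vtendsto v b 0" and sa: "vsums a A" and sb: "vsums b B"
  shows "vsums (\<lambda>k. \<Sum>i\<le>k. a i * b (k - i)) (A * B)"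
proof -
  obtain Ma where Ma: "Ma > 0" "\<And>i. v (a i) \<le> Ma" using vbounded[OF a0] by blast
  obtain Mb where Mb: "Mb > 0" "\<And>i. v (b i) \<le> Mb" using vbounded[OF b0] by blast
  define S1 where "S1 N = {..<N} \<times> {..<N}" for N :: nat
  define S2 where "S2 N = {(i,j). i + j < N}" for N :: nat
  define g where "g = (\<lambda>(i,j). a i * b j)"
  have fin1: "finite (S1 N)" for N by (simp add: S1_def)
  have sub: "S2 N \<subseteq> S1 N" for N by (auto simp: S1_def S2_def)
  have P: "vtendsto v (\<lambda>N. sum g (S1 N)) (A * B)"
  proof -
    have "vtendsto v (\<lambda>N. (\<Sum>i<N. a i) * (\<Sum>j<N. b j)) (A * B)"
      using sa sb unfolding vsums_def by (rule vtendsto_mult)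
    moreover have "(\<Sum>i<N. a i) * (\<Sum>j<N. b j) = sum g (S1 N)" for N
      unfolding S1_def g_def by (simp add: sum_product sum.cartesian_product)
    ultimately show ?thesis by simp
  qed
  have T: "(\<Sum>k<N. \<Sum>i\<le>k. a i * b (k - i)) = sum g (S2 N)" for N
    unfolding S2_def g_def using sum.triangle_reindex[of "\<lambda>i j. a i * b j" N] by simp
  have D: "vtendsto v (\<lambda>N. sum g (S1 N) - sum g (S2 N)) 0"
  proof (rule vtendstoI)
    fix e :: real assume e: "e > 0"
    have e1: "e / Mb > 0" "e / Ma > 0" using e Ma Mb by auto
    obtain K1 where K1: "\<forall>n\<ge>K1. v (a n - 0) < e / Mb" using vtendstoD[OF a0 e1(1)] by blast
    obtain K2 where K2: "\<forall>n\<ge>K2. v (b n - 0) < e / Ma" using vtendstoD[OF b0 e1(2)] by blast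
    have "\<forall>N\<ge>2 * max K1 K2. v (sum g (S1 N) - sum g (S2 N) - 0) < e"
    proof (intro allI impI)
      fix N assume N: "N \<ge> 2 * max K1 K2"
      have "sum g (S1 N) - sum g (S2 N) = sum g (S1 N - S2 N)"
        by (rule sum_diff[OF fin1 sub, symmetric])
      also have "v \<dots> < e"
      proof (rule vsum_less)
        fix x assume "x \<in> S1 N - S2 N"
        then obtain i j where x: "x = (i, j)" and ij: "N \<le> i + j"
          by (auto simp: S1_def S2_def)
        then have "i \<ge> max K1 K2 \<or> j \<ge> max K1 K2" using N by linarith
        then show "v (g x) < e"
        proof
          assume "i \<ge> max K1 K2"
          then have ai: "v (a i) < e / Mb" using K1 by simp
          have "v (g x) = v (a i) * v (b j)" by (simp add: x g_def vmult)
          also have "\<dots> \<le> v (a i) * Mb" using Mb by (intro mult_left_mono) auto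
          also have "\<dots> < e" using ai Mb by (simp add: less_divide_eq)
          finally show ?thesis .
        next
          assume "j \<ge> max K1 K2"
          then have bj: "v (b j) < e / Ma" using K2 by simp
          have "v (g x) = v (a i) * v (b j)" by (simp add: x g_def vmult)
          also have "\<dots> \<le> Ma * v (b j)" using Ma by (intro mult_right_mono) auto
          also have "\<dots> < e" using bj Ma by (simp add: less_divide_eq mult.commute)
          finally show ?thesis .
        qed
      qed (use e in simp)
      finally show "v (sum g (S1 N) - sum g (S2 N) - 0) < e" by simp
    qed
    then show "\<exists>N. \<forall>n\<ge>N. v (sum g (S1 n) - sum g (S2 n) - 0) < e" by blast
  qed
  have "vtendsto v (\<lambda>N. sum g (S1 N) - (sum g (S1 N) - sum g (S2 N))) (A * B - 0)"
    by (rule vtendsto_diff[OF P D])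
  then show ?thesis unfolding vsums_def T by simp
qed

lemma exp_term: assumes "n \<ge> 1" shows "v (y ^ n / fact n) \<le> rho * (v y / rho) ^ n"
proof -
  have f: "rho ^ (n - 1) \<le> v (fact n :: 'a)" by (rule vfact_bound)
  have rp: "rho ^ (n - 1) > 0" using rho_pos by simp
  have "v (y ^ n / fact n) = v y ^ n / v (fact n :: 'a)" by (simp add: vdivide vpower)
  also have "\<dots> \<le> v y ^ n / rho ^ (n - 1)"
    using f rp by (intro divide_left_mono) (auto intro: mult_pos_pos)
  also have "v y ^ n / rho ^ (n - 1) = rho * (v y / rho) ^ n"
    using assms rho_pos by (cases n) (auto simp: power_divide field_simps)
  finally show ?thesis .
qed

lemma exp_tendsto0: assumes "v y < rho" shows "vtendsto v (\<lambda>n. y ^ n / fact n) 0"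
proof (rule vtendsto_zero_geom[of _ 1 "v y / rho"])
  fix n
  show "v (y ^ n / fact n) \<le> 1 * (v y / rho) ^ n"
  proof (cases "n = 0")
    case False
    then have "v (y ^ n / fact n) \<le> rho * (v y / rho) ^ n" using exp_term by simp
    also have "\<dots> \<le> 1 * (v y / rho) ^ n" using rho_le1 rho_pos
      by (intro mult_right_mono) auto
    finally show ?thesis .
  qed simp
qed (use assms rho_pos in auto)

lemma exp_sums: assumes "v y < rho" shows "vsums (\<lambda>n. y ^ n / fact n) (pexp v y)"
proof -
  obtain s where s: "vsums (\<lambda>n. y ^ n / fact n) s" using vsums_conv[OF exp_tendsto0[OF assms]] by blast
  then have "pexp v y = s" unfolding pexp_def by (rule vsuminf_eq)
  then show ?thesis using s by simp
qed

lemma exp_add: assumes "v a < rho" "v b < rho" shows "pexp v (a + b) = pexp v a * pexp v b"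
proof -
  have ab: "v (a + b) < rho" using vadd[of a b] assms by simp
  have "vsums (\<lambda>k. \<Sum>i\<le>k. a ^ i / fact i * (b ^ (k - i) / fact (k - i))) (pexp v a * pexp v b)"
    by (rule vsums_cauchy[OF exp_tendsto0[OF assms(1)] exp_tendsto0[OF assms(2)]
          exp_sums[OF assms(1)] exp_sums[OF assms(2)]])
  moreover have "(\<Sum>i\<le>k. a ^ i / fact i * (b ^ (k - i) / fact (k - i))) = (a + b) ^ k / fact k" for k
  proof -
    have "(a + b) ^ k / fact k = (\<Sum>i\<le>k. of_nat (k choose i) * a ^ i * b ^ (k - i)) / fact k"
      by (simp add: binomial_ring)
    also have "\<dots> = (\<Sum>i\<le>k. of_nat (k choose i) * a ^ i * b ^ (k - i) / fact k)"
      by (simp add: sum_divide_distrib)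
    also have "\<dots> = (\<Sum>i\<le>k. a ^ i / fact i * (b ^ (k - i) / fact (k - i)))"
    proof (intro sum.cong refl)
      fix i assume "i \<in> {..k}"
      then have "i \<le> k" by simp
      then show "of_nat (k choose i) * a ^ i * b ^ (k - i) / fact k = a ^ i / fact i * (b ^ (k - i) / fact (k - i))"
        by (simp add: binomial_fact field_simps)
    qed
    finally show ?thesis by simp
  qed
  ultimately have "vsums (\<lambda>k. (a + b) ^ k / fact k) (pexp v a * pexp v b)" by simp
  then show ?thesis using exp_sums[OF ab] vsums_unique by blast
qed

lemma exp_0: "pexp v 0 = 1"
proof -
  have "vsums (\<lambda>n. (0::'a) ^ n / fact n) (\<Sum>n<1. (0::'a) ^ n / fact n)"
    by (rule vsums_finite) simp
  then show ?thesis using exp_sums[of 0] rho_pos vsums_unique by fastforce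
qed

lemma exp_est: assumes "v y < rho" shows "v (pexp v y - 1 - y) \<le> v y ^ 2 / rho"
proof -
  define f where "f = (\<lambda>n. y ^ n / fact n)"
  have s: "vsums f (pexp v y)" using exp_sums[OF assms] by (simp add: f_def)
  have f0: "f 0 = 1" and f1: "f (Suc 0) = y" by (simp_all add: f_def)
  have "vsums f (pexp v y - 1 + f 0)" using s by (simp only: f0 diff_add_cancel)
  then have s1: "vsums (\<lambda>n. f (Suc n)) (pexp v y - 1)" by (simp only: vsums_Suc_iff)
  have "vsums (\<lambda>n. f (Suc n)) (pexp v y - 1 - y + f (Suc 0))" using s1 by (simp only: f1 diff_add_cancel)
  then have "vsums (\<lambda>n. f (Suc (Suc n))) (pexp v y - 1 - y)"
    using vsums_Suc_iff[of "\<lambda>n. f (Suc n)"] by blast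
  moreover have "v (f (Suc (Suc n))) \<le> v y ^ 2 / rho" for n
  proof -
    have "v (f (Suc (Suc n))) \<le> rho * (v y / rho) ^ (Suc (Suc n))"
      unfolding f_def by (rule exp_term) simp
    also have "\<dots> = v y ^ 2 / rho * (v y / rho) ^ n"
      using rho_pos by (simp add: power_divide field_simps power2_eq_square)
    also have "\<dots> \<le> v y ^ 2 / rho * 1"
      using assms rho_pos by (intro mult_left_mono power_le_one) auto
    finally show ?thesis by simp
  qed
  ultimately show ?thesis by (rule vsums_bound)
qed

lemma exp_eq1: assumes "v y < rho" "pexp v y = 1" shows "y = 0"
proof (rule ccontr)
  assume "y \<noteq> 0"
  then have yp: "v y > 0" using vnn[of y] by (simp add: order_le_less)
  have "v (- y) \<le> v y ^ 2 / rho" using exp_est[OF assms(1)] assms(2) by simp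
  then have "v y * rho \<le> v y * v y" using rho_pos by (simp add: field_simps power2_eq_square)
  then have "rho \<le> v y" using yp by simp
  then show False using assms(1) by simp
qed

lemma exp_nat: assumes "v y < rho" shows "pexp v (of_nat x * y) = pexp v y ^ x"
proof (induction x)
  case 0
  then show ?case by (simp add: exp_0)
next
  case (Suc x)
  have "v (of_nat x * y) < rho" using vnat_mult_le[of x y] assms by simp
  then have "pexp v (of_nat x * y + y) = pexp v (of_nat x * y) * pexp v y"
    using assms by (rule exp_add)
  then show ?case using Suc by (simp add: algebra_simps)
qed

lemma exp_lim: assumes "v y < rho" "m \<noteq> 0"
  shows "v ((pexp v (of_nat m * y) - 1) / of_nat m - y) \<le> v (of_nat m :: 'a) * rho"
proof -
  define z where "z = of_nat m * y"
  have "v (of_nat m :: 'a) \<noteq> 0" using assms(2) by simp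
  then have vm: "v (of_nat m :: 'a) > 0" using vnn[of "of_nat m"] by linarith
  have vz: "v z = v (of_nat m :: 'a) * v y" by (simp add: z_def vmult)
  have zr: "v z < rho" using vnat_mult_le[of m y] assms by (simp add: z_def)
  have "(pexp v z - 1) / of_nat m - y = (pexp v z - 1 - z) / of_nat m"
    using assms(2) by (simp add: z_def field_simps)
  then have "v ((pexp v z - 1) / of_nat m - y) = v (pexp v z - 1 - z) / v (of_nat m :: 'a)"
    by (simp add: vdivide)
  also have "\<dots> \<le> (v z ^ 2 / rho) / v (of_nat m :: 'a)"
    using exp_est[OF zr] vm by (intro divide_right_mono) auto
  also have "\<dots> = v (of_nat m :: 'a) * (v y * v y / rho)"
    using vm rho_pos by (simp add: vz power2_eq_square field_simps)
  also have "\<dots> \<le> v (of_nat m :: 'a) * rho"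
  proof -
    have "v y * v y \<le> rho * rho" using assms(1) rho_pos by (intro mult_mono) auto
    then have "v y * v y / rho \<le> rho" using rho_pos by (simp add: divide_le_eq)
    then show ?thesis by (intro mult_left_mono) auto
  qed
  finally show ?thesis by (simp add: z_def)
qed

end


lemma exp_oo_ln: "(fps_exp (1::'a::field_char_0) oo fps_ln 1) = 1 + fps_X"
proof -
  have b0: "fps_nth (fps_exp (1::'a) - 1) 0 = 0" by simp
  have b1: "fps_nth (fps_exp (1::'a) - 1) 1 \<noteq> 0" by simp
  have "fps_ln (1::'a) = fps_inv (fps_exp 1 - 1)" by (rule fps_ln_fps_exp_inv) simp
  then have "(fps_exp (1::'a) - 1) oo fps_ln 1 = fps_X" using fps_inv_right[OF b0 b1] by simp
  moreover have "(fps_exp (1::'a) - 1) oo fps_ln 1 = (fps_exp 1 oo fps_ln 1) - (1 oo fps_ln 1)"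
    by (rule fps_compose_sub_distrib)
  ultimately show ?thesis by (simp add: algebra_simps)
qed

lemma exp_oo_ln_nth: "(\<Sum>i=0..k. fps_nth (fps_ln (1::'a::field_char_0) ^ i) k / fact i) =
   (if k = 0 then 1 else if k = 1 then 1 else 0)"
proof -
  have "fps_nth (fps_exp (1::'a) oo fps_ln 1) k = (\<Sum>i=0..k. fps_nth (fps_ln (1::'a) ^ i) k / fact i)"
    by (simp add: fps_compose_nth of_nat_fact)
  also have "fps_nth (fps_exp (1::'a) oo fps_ln 1) k = fps_nth (1 + fps_X :: 'a fps) k"
    by (simp only: exp_oo_ln)
  also have "\<dots> = (if k = 0 then 1 else if k = 1 then 1 else 0)"
    by (simp add: fps_X_nth)
  finally show ?thesis by simp
qed

locale padicq = padic +
  fixes q :: 'a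
  assumes qsmall: "v (1 - q) < rho" and q1: "q \<noteq> 1"
begin

definition u where "u = q - 1"
definition t where "t = v u"
definition r where "r = t / rho"
abbreviation Lf where "Lf \<equiv> fps_ln (1::'a)"
definition ell where "ell k = fps_nth Lf k * u ^ k"
definition L where "L = plog v q"

lemma t_lt: "t < rho" using qsmall by (simp add: t_def u_def vsym)
lemma r_nn: "0 \<le> r" using rho_pos by (simp add: r_def t_def)
lemma r_lt1: "r < 1" using t_lt rho_pos by (simp add: r_def)
lemma t_nn: "0 \<le> t" by (simp add: t_def)

lemma ell0: "ell 0 = 0" by (simp add: ell_def)

lemma ell_bound: "v (ell k) \<le> rho * r ^ k"
proof (cases "k = 0")
  case True
  then show ?thesis using rho_pos r_nn by (simp add: ell0)
next
  case False
  have nb: "rho ^ (k - 1) \<le> v (of_nat k :: 'a)" using False vnat_bound by simp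
  have rp: "rho ^ (k - 1) > 0" using rho_pos by simp
  have "v (ell k) = t ^ k / v (of_nat k :: 'a)"
    using False by (simp add: ell_def fps_ln_nth vmult vdivide vpower t_def)
  also have "\<dots> \<le> t ^ k / rho ^ (k - 1)"
    using nb rp t_nn by (intro divide_left_mono) (auto intro: mult_pos_pos)
  also have "t ^ k / rho ^ (k - 1) = rho * r ^ k"
    using False rho_pos by (cases k) (auto simp: r_def power_divide field_simps)
  finally show ?thesis .
qed

lemma ell_le_t: "v (ell k) \<le> t"
proof (cases "k = 0")
  case True then show ?thesis by (simp add: ell0 t_def)
next
  case False
  have "v (ell k) \<le> rho * r ^ k" by (rule ell_bound)
  also have "\<dots> \<le> rho * r ^ 1" using False r_nn r_lt1 rho_pos
    by (intro mult_left_mono power_decreasing) auto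
  also have "\<dots> = t" using rho_pos by (simp add: r_def)
  finally show ?thesis .
qed

lemma ell_tendsto0: "vtendsto v ell 0"
  by (rule vtendsto_zero_geom[of _ rho r]) (use ell_bound r_nn r_lt1 in auto)

lemma L_sums: "vsums ell L"
proof -
  obtain s where s: "vsums ell s" using vsums_conv[OF ell_tendsto0] by blast
  then have s1: "vsums (\<lambda>n. ell (Suc n)) s" using vsums_Suc_iff[of ell s] by (simp add: ell0)
  have "(\<lambda>n. (-1) ^ n * (q - 1) ^ (n + 1) / of_nat (n + 1)) = (\<lambda>n. ell (Suc n))"
    by (auto simp: ell_def fps_ln_nth u_def)
  then have "L = vsuminf v (\<lambda>n. ell (Suc n))" by (simp add: L_def plog_def)
  also have "\<dots> = s" using s1 by (rule vsuminf_eq)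
  finally show ?thesis using s by simp
qed

lemma L_le_t: "v L \<le> t" using L_sums ell_le_t by (rule vsums_bound)
lemma L_small: "v L < rho" using L_le_t t_lt by simp

lemma pow_series: "vsums (\<lambda>k. fps_nth (Lf ^ n) k * u ^ k) (L ^ n) \<and> (\<forall>k. v (fps_nth (Lf ^ n) k * u ^ k) \<le> r ^ k)
   \<and> (\<forall>k. v (fps_nth (Lf ^ n) k * u ^ k) \<le> t ^ n) \<and> (\<forall>k<n. fps_nth (Lf ^ n) k = 0)"
proof (induction n)
  case 0
  have "vsums (\<lambda>k. fps_nth (Lf ^ 0) k * u ^ k) (\<Sum>k<1. fps_nth (Lf ^ 0) k * u ^ k)"
    by (rule vsums_finite) simp
  then show ?case using r_nn by simp
next
  case (Suc n)
  define a where "a = (\<lambda>k. fps_nth (Lf ^ n) k * u ^ k)"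
  have IH1: "vsums a (L ^ n)" and IH2: "\<And>k. v (a k) \<le> r ^ k" and IH3: "\<And>k. v (a k) \<le> t ^ n"
    and IH4: "\<And>k. k < n \<Longrightarrow> fps_nth (Lf ^ n) k = 0"
    using Suc by (auto simp: a_def)
  have a0: "vtendsto v a 0" by (rule vtendsto_zero_geom[of _ 1 r]) (use IH2 r_nn r_lt1 in auto)
  have eq: "fps_nth (Lf ^ Suc n) k * u ^ k = (\<Sum>i\<le>k. a i * ell (k - i))" for k
  proof -
    have "fps_nth (Lf ^ Suc n) k * u ^ k = (\<Sum>i=0..k. fps_nth (Lf ^ n) i * fps_nth Lf (k - i)) * u ^ k"
      by (simp only: power_Suc2 fps_mult_nth)
    also have "\<dots> = (\<Sum>i=0..k. fps_nth (Lf ^ n) i * fps_nth Lf (k - i) * u ^ k)"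
      by (simp add: sum_distrib_right)
    also have "\<dots> = (\<Sum>i\<le>k. a i * ell (k - i))"
      unfolding atLeast0AtMost
    proof (intro sum.cong refl)
      fix i assume "i \<in> {..k}"
      then have "u ^ k = u ^ i * u ^ (k - i)" by (simp add: power_add[symmetric])
      then show "fps_nth (Lf ^ n) i * fps_nth Lf (k - i) * u ^ k = a i * ell (k - i)"
        by (simp add: a_def ell_def)
    qed
    finally show ?thesis .
  qed
  have S: "vsums (\<lambda>k. fps_nth (Lf ^ Suc n) k * u ^ k) (L ^ Suc n)"
  proof -
    have "vsums (\<lambda>k. \<Sum>i\<le>k. a i * ell (k - i)) (L ^ n * L)"
      by (rule vsums_cauchy[OF a0 ell_tendsto0 IH1 L_sums])
    then show ?thesis unfolding eq by (simp only: power_Suc2)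
  qed
  have B2: "v (fps_nth (Lf ^ Suc n) k * u ^ k) \<le> r ^ k" for k
    unfolding eq
  proof (rule vsum_le)
    fix i assume "i \<in> {..k}"
    then have ik: "i \<le> k" by simp
    have "v (a i * ell (k - i)) = v (a i) * v (ell (k - i))" by (simp add: vmult)
    also have "\<dots> \<le> r ^ i * (rho * r ^ (k - i))"
      using IH2 ell_bound r_nn by (intro mult_mono) auto
    also have "\<dots> \<le> r ^ i * (1 * r ^ (k - i))"
      using rho_le1 r_nn by (intro mult_left_mono mult_right_mono) auto
    also have "\<dots> = r ^ k" using ik by (simp add: power_add[symmetric])
    finally show "v (a i * ell (k - i)) \<le> r ^ k" .
  qed (use r_nn in simp)
  have B3: "v (fps_nth (Lf ^ Suc n) k * u ^ k) \<le> t ^ Suc n" for k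
    unfolding eq
  proof (rule vsum_le)
    fix i assume "i \<in> {..k}"
    have "v (a i * ell (k - i)) = v (a i) * v (ell (k - i))" by (simp add: vmult)
    also have "\<dots> \<le> t ^ n * t"
      using IH3 ell_le_t t_nn by (intro mult_mono) auto
    finally show "v (a i * ell (k - i)) \<le> t ^ Suc n" by (simp add: mult.commute)
  qed (use t_nn in simp)
  have B4: "fps_nth (Lf ^ Suc n) k = 0" if "k < Suc n" for k
  proof -
    have "fps_nth (Lf ^ Suc n) k = (\<Sum>i=0..k. fps_nth (Lf ^ n) i * fps_nth Lf (k - i))"
      by (simp only: power_Suc2 fps_mult_nth)
    also have "\<dots> = 0"
    proof (intro sum.neutral ballI)
      fix i assume "i \<in> {0..k}"
      then show "fps_nth (Lf ^ n) i * fps_nth Lf (k - i) = 0"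
      proof (cases "i < n")
        case True then show ?thesis using IH4 by simp
      next
        case False
        then have "k - i = 0" using that \<open>i \<in> {0..k}\<close> by auto
        then show ?thesis by simp
      qed
    qed
    finally show ?thesis .
  qed
  show ?case using S B2 B3 B4 by blast
qed

end

context padicq begin

definition H where "H n k = fps_nth (Lf ^ n) k * u ^ k / fact n"

lemma H_zero: "k < n \<Longrightarrow> H n k = 0"
  using pow_series[of n] by (simp add: H_def)

lemma H_bound: assumes "n \<ge> 1" shows "v (H n k) \<le> rho * r ^ n"
proof -
  have f: "rho ^ (n - 1) \<le> v (fact n :: 'a)" by (rule vfact_bound)
  have rp: "rho ^ (n - 1) > 0" using rho_pos by simp
  have tn: "v (fps_nth (Lf ^ n) k * u ^ k) \<le> t ^ n" using pow_series[of n] by blast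
  have "v (H n k) = v (fps_nth (Lf ^ n) k * u ^ k) / v (fact n :: 'a)" by (simp add: H_def vdivide)
  also have "\<dots> \<le> t ^ n / v (fact n :: 'a)"
    using tn f rp by (intro divide_right_mono) auto
  also have "\<dots> \<le> t ^ n / rho ^ (n - 1)"
    using f rp t_nn by (intro divide_left_mono) (auto intro: mult_pos_pos)
  also have "t ^ n / rho ^ (n - 1) = rho * r ^ n"
    using assms rho_pos by (cases n) (auto simp: r_def power_divide field_simps)
  finally show ?thesis .
qed

definition Dk where "Dk k = (\<Sum>n<Suc k. H n k)"

lemma Dk_eq: "Dk k = (if k = 0 then 1 else if k = 1 then 1 else 0) * u ^ k"
proof -
  have "Dk k = (\<Sum>n=0..k. fps_nth (Lf ^ n) k / fact n * u ^ k)"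
    unfolding Dk_def H_def lessThan_Suc_atMost atLeast0AtMost[symmetric]
    by (intro sum.cong refl) (simp add: field_simps)
  also have "\<dots> = (\<Sum>n=0..k. fps_nth (Lf ^ n) k / fact n) * u ^ k"
    by (simp add: sum_distrib_right)
  also have "\<dots> = (if k = 0 then 1 else if k = 1 then 1 else 0) * u ^ k"
    by (simp only: exp_oo_ln_nth)
  finally show ?thesis .
qed

lemma Dk_sums: "vsums Dk (1 + u)"
proof -
  have "vsums Dk (\<Sum>k<2. Dk k)" by (rule vsums_finite) (simp add: Dk_eq)
  moreover have "(\<Sum>k<2. Dk k) = 1 + u" by (simp add: Dk_eq numeral_2_eq_2)
  ultimately show ?thesis by simp
qed

definition G where "G N k = (\<Sum>n<N. H n k)"
definition EE where "EE N = (\<Sum>n<N. L ^ n / fact n)"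

lemma G_sums: "vsums (G N) (EE N)"
proof -
  have "vsums (\<lambda>k. \<Sum>n\<in>{..<N}. H n k) (\<Sum>n\<in>{..<N}. L ^ n / fact n)"
  proof (rule vsums_sum)
    fix n assume "n \<in> {..<N}"
    have "vsums (\<lambda>k. fps_nth (Lf ^ n) k * u ^ k) (L ^ n)" using pow_series[of n] by blast
    then show "vsums (\<lambda>k. H n k) (L ^ n / fact n)" unfolding H_def by (rule vsums_divide)
  qed simp
  then show ?thesis by (simp add: G_def[abs_def] EE_def)
qed

lemma DG_bound: assumes "N \<ge> 1" shows "v (Dk k - G N k) \<le> rho * r ^ N"
proof (cases "Suc k \<le> N")
  case True
  have "(\<Sum>n<Suc k. H n k) + (\<Sum>n\<in>{Suc k..<N}. H n k) = G N k"
    unfolding G_def lessThan_atLeast0 by (rule sum.atLeastLessThan_concat) (use True in auto)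
  then have "G N k = (\<Sum>n<Suc k. H n k) + (\<Sum>n\<in>{Suc k..<N}. H n k)" by simp
  also have "(\<Sum>n\<in>{Suc k..<N}. H n k) = 0" by (intro sum.neutral) (auto intro: H_zero)
  finally have "Dk k - G N k = 0" by (simp add: Dk_def)
  then show ?thesis using rho_pos r_nn by simp
next
  case False
  have "(\<Sum>n<N. H n k) + (\<Sum>n\<in>{N..<Suc k}. H n k) = Dk k"
    unfolding Dk_def lessThan_atLeast0 by (rule sum.atLeastLessThan_concat) (use False in auto)
  then have "Dk k = (\<Sum>n<N. H n k) + (\<Sum>n\<in>{N..<Suc k}. H n k)" by simp
  then have "Dk k - G N k = (\<Sum>n\<in>{N..<Suc k}. H n k)" by (simp add: G_def)
  also have "v \<dots> \<le> rho * r ^ N"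
  proof (rule vsum_le)
    fix n assume "n \<in> {N..<Suc k}"
    then have n: "n \<ge> N" by simp
    have "v (H n k) \<le> rho * r ^ n" using n assms by (intro H_bound) simp
    also have "\<dots> \<le> rho * r ^ N" using n r_nn r_lt1 rho_pos
      by (intro mult_left_mono power_decreasing) auto
    finally show "v (H n k) \<le> rho * r ^ N" .
  qed (use rho_pos r_nn in simp)
  finally show ?thesis .
qed

lemma exp_L: "pexp v L = q"
proof -
  have "vtendsto v EE (1 + u)"
  proof (rule vtendsto_bound[of 1])
    fix N :: nat assume N: "N \<ge> 1"
    have "vsums (\<lambda>k. Dk k - G N k) (1 + u - EE N)" by (rule vsums_diff[OF Dk_sums G_sums])
    then have "v (1 + u - EE N) \<le> rho * r ^ N" using DG_bound[OF N] by (rule vsums_bound)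
    then show "v (EE N - (1 + u)) \<le> rho * r ^ N" by (simp add: vsym)
  next
    show "(\<lambda>N. rho * r ^ N) \<longlonglongrightarrow> 0" using r_nn r_lt1
      by (intro tendsto_mult_right_zero LIMSEQ_power_zero) auto
  qed
  moreover have "vtendsto v EE (pexp v L)"
    using exp_sums[OF L_small] unfolding vsums_def EE_def by simp
  ultimately show ?thesis using vtendsto_unique by (fastforce simp: u_def)
qed

lemma qpow_eq: "qpow v q x = q ^ x"
  unfolding qpow_def L_def[symmetric] using exp_nat[OF L_small, of x] exp_L by simp

lemma qpow_ne1: assumes "l \<ge> 1" shows "q ^ l \<noteq> 1"
proof
  assume a: "q ^ l = 1"
  have s: "v (of_nat l * L) < rho" using vnat_mult_le[of l L] L_small by simp
  have "pexp v (of_nat l * L) = 1" using exp_nat[OF L_small, of l] exp_L a by simp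
  then have "of_nat l * L = 0" by (rule exp_eq1[OF s])
  then have "L = 0" using assms by simp
  then have "q = 1" using exp_L exp_0 by simp
  then show False using q1 by simp
qed

lemma qlim: assumes "l \<ge> 1"
  shows "vtendsto v (\<lambda>N. ((q ^ l) ^ (p ^ N) - 1) / of_nat (p ^ N)) (of_nat l * L)"
proof (rule vtendsto_bound[of 0])
  fix N :: nat
  define M where "M = p ^ N"
  define m where "m = l * M"
  have M0: "M \<noteq> 0" using p2 by (simp add: M_def)
  have m0: "m \<noteq> 0" using M0 assms by (simp add: m_def)
  have qm: "(q ^ l) ^ M = pexp v (of_nat m * L)"
    using exp_nat[OF L_small, of m] exp_L by (simp add: m_def power_mult)
  have "((q ^ l) ^ M - 1) / of_nat M - of_nat l * L
      = of_nat l * ((pexp v (of_nat m * L) - 1) / of_nat m - L)"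
    using M0 assms by (simp add: qm m_def field_simps)
  then have "v (((q ^ l) ^ M - 1) / of_nat M - of_nat l * L)
      = v (of_nat l :: 'a) * v ((pexp v (of_nat m * L) - 1) / of_nat m - L)" by (simp add: vmult)
  also have "\<dots> \<le> 1 * (v (of_nat m :: 'a) * rho)"
    using vnat[of l] exp_lim[OF L_small m0] by (intro mult_mono) auto
  also have "\<dots> \<le> (1 / real p) ^ N"
  proof -
    have "v (of_nat m :: 'a) = v (of_nat l :: 'a) * (1 / real p) ^ N"
      by (simp add: m_def M_def vmult vpowp del: of_nat_power)
    also have "\<dots> \<le> 1 * (1 / real p) ^ N" using vnat[of l] by (intro mult_right_mono) auto
    finally have "v (of_nat m :: 'a) \<le> (1 / real p) ^ N" by simp
    moreover have "v (of_nat m :: 'a) * rho \<le> v (of_nat m :: 'a)"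
      using rho_le1 by (simp add: mult_left_le)
    ultimately show ?thesis by simp
  qed
  finally show "v (((q ^ l) ^ (p ^ N) - 1) / of_nat (p ^ N) - of_nat l * L) \<le> (1 / real p) ^ N"
    by (simp add: M_def)
next
  show "(\<lambda>N. (1 / real p) ^ N) \<longlonglongrightarrow> 0" using p2 by (intro LIMSEQ_power_zero) auto
qed

end

context padicq begin

definition Q where "Q x = (1 - q ^ x) / (1 - q)"
definition S where "S n N = volkenborn_sums p (\<lambda>x. qnum v q x ^ n) N"
definition gg where "gg l N = (\<Sum>x<p ^ N. (q ^ l) ^ x) / of_nat (p ^ N)"
definition cc where "cc l = (if l = 0 then 1 else of_nat l * L / (q ^ l - 1))"

lemma vtendsto_eq: "vtendsto v f a \<Longrightarrow> (\<And>n. f n = g n) \<Longrightarrow> a = b \<Longrightarrow> vtendsto v g b"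
  by (simp add: vtendsto_def)

lemma qnum_eq: "qnum v q x = Q x" by (simp add: qnum_def Q_def qpow_eq)

lemma pN0: "(of_nat (p ^ N) :: 'a) \<noteq> 0" using p2 by simp

lemma q1': "1 - q \<noteq> 0" using q1 by simp

lemma binom_exp: "(1 - q ^ x) ^ n = (\<Sum>l\<le>n. of_nat (n choose l) * (-1) ^ l * (q ^ l) ^ x)"
proof -
  have "(1 - q ^ x) ^ n = (- (q ^ x) + 1) ^ n" by simp
  also have "\<dots> = (\<Sum>l\<le>n. of_nat (n choose l) * (- (q ^ x)) ^ l * 1 ^ (n - l))"
    by (rule binomial_ring)
  also have "\<dots> = (\<Sum>l\<le>n. of_nat (n choose l) * (-1) ^ l * (q ^ l) ^ x)"
  proof (intro sum.cong refl)
    fix l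
    have e1: "(- (q ^ x)) ^ l = (-1) ^ l * (q ^ x) ^ l" by (rule power_minus)
    have e2: "(q ^ x) ^ l = (q ^ l) ^ x" by (metis power_mult mult.commute)
    have "(- (q ^ x)) ^ l = (-1) ^ l * (q ^ l) ^ x" unfolding e1 e2 ..
    then show "of_nat (n choose l) * (- (q ^ x)) ^ l * 1 ^ (n - l) = of_nat (n choose l) * (-1) ^ l * (q ^ l) ^ x"
      by (simp add: mult.assoc)
  qed
  finally show ?thesis .
qed

lemma S_eq: "S n N = 1 / (1 - q) ^ n * (\<Sum>l\<le>n. of_nat (n choose l) * (-1) ^ l * gg l N)"
proof -
  define M where "M = p ^ N"
  define C where "C l = (of_nat (n choose l) * (-1) ^ l :: 'a)" for l
  have "(\<Sum>x<M. Q x ^ n) = (\<Sum>x<M. (\<Sum>l\<le>n. C l * (q ^ l) ^ x) / (1 - q) ^ n)"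
    by (intro sum.cong refl) (simp only: Q_def power_divide binom_exp C_def)
  also have "\<dots> = (\<Sum>x<M. \<Sum>l\<le>n. C l * (q ^ l) ^ x) / (1 - q) ^ n"
    by (simp only: sum_divide_distrib)
  also have "(\<Sum>x<M. \<Sum>l\<le>n. C l * (q ^ l) ^ x) = (\<Sum>l\<le>n. C l * (\<Sum>x<M. (q ^ l) ^ x))"
    by (subst sum.swap) (simp only: sum_distrib_left)
  finally have A: "(\<Sum>x<M. Q x ^ n) = (\<Sum>l\<le>n. C l * (\<Sum>x<M. (q ^ l) ^ x)) / (1 - q) ^ n" .
  have "S n N = (\<Sum>x<M. Q x ^ n) / of_nat M"
    by (simp only: S_def volkenborn_sums_def qnum_eq M_def)
  also have "\<dots> = 1 / (1 - q) ^ n * (\<Sum>l\<le>n. C l * ((\<Sum>x<M. (q ^ l) ^ x) / of_nat M))"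
  proof -
    have "(\<Sum>l\<le>n. C l * (\<Sum>x<M. (q ^ l) ^ x)) / of_nat M = (\<Sum>l\<le>n. C l * (\<Sum>x<M. (q ^ l) ^ x) / of_nat M)"
      by (rule sum_divide_distrib)
    also have "\<dots> = (\<Sum>l\<le>n. C l * ((\<Sum>x<M. (q ^ l) ^ x) / of_nat M))"
      by (intro sum.cong refl) (simp only: times_divide_eq_right)
    finally have "(\<Sum>l\<le>n. C l * ((\<Sum>x<M. (q ^ l) ^ x) / of_nat M)) = (\<Sum>l\<le>n. C l * (\<Sum>x<M. (q ^ l) ^ x)) / of_nat M" by simp
    then show ?thesis unfolding A by simp
  qed
  finally show ?thesis by (simp only: gg_def M_def C_def)
qed

lemma gg_lim: "vtendsto v (gg l) (cc l)"
proof (cases "l = 0")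
  case True
  have "gg l N = 1" for N using True pN0[of N] by (simp add: gg_def)
  then show ?thesis using True by (intro vtendsto_eq[OF vtendsto_const[of 1]]) (auto simp: cc_def)
next
  case False
  then have l1: "l \<ge> 1" by simp
  have w1: "q ^ l \<noteq> 1" by (rule qpow_ne1[OF l1])
  then have w1': "q ^ l - 1 \<noteq> 0" by simp
  have "gg l N = ((q ^ l) ^ (p ^ N) - 1) / of_nat (p ^ N) * inverse (q ^ l - 1)" for N
  proof -
    have w1'': "1 - q ^ l \<noteq> 0" using w1 by simp
    show ?thesis unfolding gg_def sum_gp_strict using w1 w1' w1'' pN0[of N]
      by (simp add: field_simps)
  qed
  then show ?thesis
    by (intro vtendsto_eq[OF vtendsto_mult[OF qlim[OF l1] vtendsto_const]])
       (auto simp: cc_def divide_inverse False)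
qed

definition beta where "beta n = 1 / (1 - q) ^ n *
             (1 + (\<Sum>l=1..n. of_nat (n choose l) * (-1) ^ (l - 1) *
                    (of_nat l * L / (1 - q ^ l))))"

lemma beta_alt: "beta n = 1 / (1 - q) ^ n * (\<Sum>l\<le>n. of_nat (n choose l) * (-1) ^ l * cc l)"
proof -
  have e: "{..n} = insert 0 {1..n}" by auto
  have "(\<Sum>l\<le>n. of_nat (n choose l) * (-1) ^ l * cc l)
      = 1 + (\<Sum>l=1..n. of_nat (n choose l) * (-1) ^ l * cc l)"
    unfolding e by (simp add: cc_def)
  also have "(\<Sum>l=1..n. of_nat (n choose l) * (-1) ^ l * cc l)
      = (\<Sum>l=1..n. of_nat (n choose l) * (-1) ^ (l - 1) * (of_nat l * L / (1 - q ^ l)))"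
  proof (intro sum.cong refl)
    fix l assume "l \<in> {1..n}"
    then obtain j where j: "l = Suc j" by (cases l) auto
    have d: "q ^ l - 1 = - (1 - q ^ l)" by simp
    have l0: "l \<noteq> 0" using j by simp
    have "cc l = of_nat l * L / (q ^ l - 1)" by (simp add: cc_def l0)
    also have "\<dots> = of_nat l * L / (- (1 - q ^ l))" by (simp only: d)
    also have "\<dots> = - (of_nat l * L / (1 - q ^ l))" by (rule divide_minus_right)
    finally have c: "cc l = - (of_nat l * L / (1 - q ^ l))" .
    have sg: "(-1::'a) ^ l = - ((-1) ^ (l - 1))" using j by simp
    show "of_nat (n choose l) * (-1) ^ l * cc l
        = of_nat (n choose l) * (-1) ^ (l - 1) * (of_nat l * L / (1 - q ^ l))"
      by (simp only: c sg mult_minus_left mult_minus_right minus_minus)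
  qed
  finally show ?thesis by (simp add: beta_def)
qed

lemma S_lim: "vtendsto v (S n) (beta n)"
proof -
  have "vtendsto v (\<lambda>N. 1 / (1 - q) ^ n * (\<Sum>l\<le>n. of_nat (n choose l) * (-1) ^ l * gg l N))
     (1 / (1 - q) ^ n * (\<Sum>l\<le>n. of_nat (n choose l) * (-1) ^ l * cc l))"
    by (intro vtendsto_cmult vtendsto_sum gg_lim) simp
  then show ?thesis unfolding beta_alt by (rule vtendsto_eq) (simp_all only: S_eq)
qed

lemma Q_Suc: "q * Q x + 1 = Q (Suc x)"
  using q1' by (simp add: Q_def field_simps)

lemma S_rec: assumes "n \<ge> 1"
  shows "(\<Sum>k\<le>n. of_nat (n choose k) * q ^ k * S k N) - S n N = Q (p ^ N) ^ n / of_nat (p ^ N)"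
proof -
  define M where "M = p ^ N"
  have SS: "S k N = (\<Sum>x<M. Q x ^ k) / of_nat M" for k
    by (simp add: S_def volkenborn_sums_def qnum_eq M_def)
  have "(\<Sum>k\<le>n. of_nat (n choose k) * q ^ k * S k N)
      = (\<Sum>x<M. \<Sum>k\<le>n. of_nat (n choose k) * (q * Q x) ^ k) / of_nat M"
    unfolding SS by (simp add: sum_divide_distrib sum_distrib_left sum.swap[of _ "{..<M}"]
        power_mult_distrib mult.assoc)
  also have "\<dots> = (\<Sum>x<M. Q (Suc x) ^ n) / of_nat M"
  proof -
    have "(\<Sum>k\<le>n. of_nat (n choose k) * (q * Q x) ^ k) = Q (Suc x) ^ n" for x
    proof -
      have "Q (Suc x) ^ n = (q * Q x + 1) ^ n" by (simp add: Q_Suc)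
      also have "\<dots> = (\<Sum>k\<le>n. of_nat (n choose k) * (q * Q x) ^ k * 1 ^ (n - k))"
        by (rule binomial_ring)
      finally show ?thesis by simp
    qed
    then show ?thesis by simp
  qed
  finally have A: "(\<Sum>k\<le>n. of_nat (n choose k) * q ^ k * S k N) = (\<Sum>x<M. Q (Suc x) ^ n) / of_nat M" .
  have "(\<Sum>x<M. Q (Suc x) ^ n) / of_nat M - S n N = (\<Sum>x<M. Q (Suc x) ^ n - Q x ^ n) / of_nat M"
    unfolding SS by (simp add: sum_subtractf diff_divide_distrib)
  also have "(\<Sum>x<M. Q (Suc x) ^ n - Q x ^ n) = Q M ^ n - Q 0 ^ n"
    by (rule sum_lessThan_telescope)
  also have "Q 0 ^ n = 0" using assms by (simp add: Q_def)
  finally show ?thesis using A by (simp add: M_def)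
qed

lemma pN_lim: "vtendsto v (\<lambda>N. of_nat (p ^ N) :: 'a) 0"
proof (rule vtendsto_bound[of 0])
  fix N :: nat show "v (of_nat (p ^ N) - 0 :: 'a) \<le> (1 / real p) ^ N" using vpowp[of N] by simp
next
  show "(\<lambda>N. (1 / real p) ^ N) \<longlonglongrightarrow> 0" using p2 by (intro LIMSEQ_power_zero) auto
qed

lemma QM_div_lim: "vtendsto v (\<lambda>N. Q (p ^ N) / of_nat (p ^ N)) (L / (q - 1))"
proof -
  have lim: "vtendsto v (\<lambda>N. ((q ^ 1) ^ (p ^ N) - 1) / of_nat (p ^ N) * inverse (q - 1)) (of_nat 1 * L * inverse (q - 1))"
    by (rule vtendsto_mult[OF qlim vtendsto_const]) simp
  have eq: "((q ^ 1) ^ (p ^ N) - 1) / of_nat (p ^ N) * inverse (q - 1) = Q (p ^ N) / of_nat (p ^ N)" for N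
  proof -
    have "q - 1 \<noteq> 0" using q1 by simp
    then show ?thesis using q1' pN0[of N] by (simp add: Q_def field_simps)
  qed
  have eq2: "of_nat 1 * L * inverse (q - 1) = L / (q - 1)" by (simp add: divide_inverse)
  show ?thesis by (rule vtendsto_eq[OF lim eq eq2])
qed

lemma QM_lim: "vtendsto v (\<lambda>N. Q (p ^ N)) 0"
proof -
  have "vtendsto v (\<lambda>N. of_nat (p ^ N) * (Q (p ^ N) / of_nat (p ^ N))) (0 * (L / (q - 1)))"
    by (rule vtendsto_mult[OF pN_lim QM_div_lim])
  then show ?thesis by (rule vtendsto_eq) (use pN0 in auto)
qed

lemma rec_lim: assumes "n \<ge> 1"
  shows "vtendsto v (\<lambda>N. Q (p ^ N) ^ n / of_nat (p ^ N)) (if n = 1 then L / (q - 1) else 0)"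
proof (cases "n = 1")
  case True
  then show ?thesis using QM_div_lim by simp
next
  case False
  have "vtendsto v (\<lambda>N. Q (p ^ N) / of_nat (p ^ N) * Q (p ^ N) ^ (n - 1)) (L / (q - 1) * 0 ^ (n - 1))"
    by (rule vtendsto_mult[OF QM_div_lim vtendsto_power[OF QM_lim]])
  moreover have "Q (p ^ N) / of_nat (p ^ N) * Q (p ^ N) ^ (n - 1) = Q (p ^ N) ^ n / of_nat (p ^ N)" for N
    using assms by (cases n) (auto simp: field_simps)
  moreover have "L / (q - 1) * 0 ^ (n - 1) = (if n = 1 then L / (q - 1) else 0)" using False assms by simp
  ultimately show ?thesis by (rule vtendsto_eq)
qed

end


theorem mainTheorem1:
  fixes p :: nat and v :: "'a::field_char_0 \<Rightarrow> real" and q :: 'a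
  assumes "prime p"
    and "Cp_field p v"
    and "v (1 - q) < real p powr (- 1 / (real p - 1))"
    and "q \<noteq> 1"
  shows "(\<forall>n. vconverges v (volkenborn_sums p (\<lambda>x. qnum v q x ^ n)))
    \<and> mod_qbernoulli p v q 0 = 1
    \<and> (\<forall>n\<ge>1. (\<Sum>k\<le>n. of_nat (n choose k) * q ^ k * mod_qbernoulli p v q k)
                 - mod_qbernoulli p v q n
               = (if n = 1 then plog v q / (q - 1) else 0))
    \<and> (\<forall>n. mod_qbernoulli p v q n
           = 1 / (1 - q) ^ n *
             (1 + (\<Sum>l=1..n. of_nat (n choose l) * (-1) ^ (l - 1) *
                    (of_nat l * plog v q / (1 - q ^ l)))))"
proof -
  interpret padic p v using assms(1,2) by unfold_locales
  interpret padicq p v q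
    by unfold_locales (use assms(3,4) in \<open>simp_all add: rho_def\<close>)
  have Sl: "vtendsto v (volkenborn_sums p (\<lambda>x. qnum v q x ^ n)) (beta n)" for n
    using S_lim[of n] by (simp add: S_def[abs_def])
  have mq: "mod_qbernoulli p v q n = beta n" for n
    unfolding mod_qbernoulli_def volkenborn_def using Sl by (rule vlim_eq)
  have c1: "\<forall>n. vconverges v (volkenborn_sums p (\<lambda>x. qnum v q x ^ n))"
    using Sl unfolding vconverges_def by blast
  have c2: "mod_qbernoulli p v q 0 = 1" by (simp add: mq beta_def)
  have c3: "(\<Sum>k\<le>n. of_nat (n choose k) * q ^ k * mod_qbernoulli p v q k) - mod_qbernoulli p v q n
               = (if n = 1 then plog v q / (q - 1) else 0)" if n: "n \<ge> 1" for n
  proof -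
    have "vtendsto v (\<lambda>N. (\<Sum>k\<le>n. of_nat (n choose k) * q ^ k * S k N) - S n N)
        ((\<Sum>k\<le>n. of_nat (n choose k) * q ^ k * beta k) - beta n)"
      by (intro vtendsto_diff vtendsto_sum vtendsto_cmult S_lim) simp
    then have "vtendsto v (\<lambda>N. Q (p ^ N) ^ n / of_nat (p ^ N))
        ((\<Sum>k\<le>n. of_nat (n choose k) * q ^ k * beta k) - beta n)"
      by (rule vtendsto_eq) (simp_all add: S_rec[OF n])
    then have "(\<Sum>k\<le>n. of_nat (n choose k) * q ^ k * beta k) - beta n = (if n = 1 then L / (q - 1) else 0)"
      using rec_lim[OF n] by (rule vtendsto_unique)
    then show ?thesis by (simp add: mq L_def)
  qed
  have c4: "mod_qbernoulli p v q n
           = 1 / (1 - q) ^ n *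
             (1 + (\<Sum>l=1..n. of_nat (n choose l) * (-1) ^ (l - 1) *
                    (of_nat l * plog v q / (1 - q ^ l))))" for n
    by (simp add: mq beta_def L_def)
  show ?thesis using c1 c2 c3 c4 by blast
qed


end
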